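(* Let $\mathcal{D}\in\mathbb{C}^{\mathbf{N}(s)\times\mathbf{N}(s)}$ with $\mathrm{ind}(\mathcal{D})=k$. Then (i) $\mathcal{D}^{\mathrm D,\dagger}*_s\mathcal{D}=\mathcal{D}^{c,\dagger}*_s\mathcal{D}$ if and only if $\mathscr{R}(\mathcal{D}^k)\subseteq\mathscr{R}(\mathcal{D}^\dagger)$; (ii) $\mathcal{D}*_s\mathcal{D}^{\dagger,\mathrm D}=\mathcal{D}*_s\mathcal{D}^{c,\dagger}$ if and only if $\mathcal{D}^k=\mathcal{D}^{k+1}*_s\mathcal{D}^\dagger$.
   Context: For positive integers $N_1,\dots,N_s$ write $\mathbf{N}(s)=N_1\times\cdots\times N_s$. For $\mathcal{A}\in\mathbb{C}^{\mathbf{I}(m)\times\mathbf{K}(p)}$ and $\mathcal{B}\in\mathbb{C}^{\mathbf{K}(p)\times\mathbf{J}(n)}$ the Einstein product is the tensor $\mathcal{A}*_p\mathcal{B}\in\mathbb{C}^{\mathbf{I}(m)\times\mathbf{J}(n)}$ with entries $(\mathcal{A}*_p\mathcal{B})_{i_1\dots i_m j_1\dots j_n}=\sum_{k_1,\dots,k_p}\mathcal{A}_{i_1\dots i_m k_1\dots k_p}\mathcal{B}_{k_1\dots k_p j_1\dots j_n}$; the case $n=0$ (so $\mathcal{B}\in\mathbb{C}^{\mathbf{K}(p)}$) is allowed. For $\mathcal{D}\in\mathbb{C}^{\mathbf{N}(s)\times\mathbf{N}(s)}$, powers are $\mathcal{D}^0=\mathcal{I}$, $\mathcal{D}^{j+1}=\mathcal{D}*_s\mathcal{D}^j$,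 where $\mathcal{I}$ is the identity tensor with entries $\mathcal{I}_{i_1\dots i_s j_1\dots j_s}=\prod_{t=1}^s\delta_{i_tj_t}$. The conjugate transpose $\mathcal{A}^*$ of $\mathcal{A}\in\mathbb{C}^{\mathbf{M}(m)\times\mathbf{N}(n)}$ has entries $(\mathcal{A}^* )_{j_1\dots j_n i_1\dots i_m}=\overline{\mathcal{A}_{i_1\dots i_m j_1\dots j_n}}$. For $\mathcal{A}\in\mathbb{C}^{\mathbf{M}(m)\times\mathbf{N}(n)}$, $\mathscr{R}(\mathcal{A})=\{\mathcal{A}*_n\mathcal{E}:\mathcal{E}\in\mathbb{C}^{\mathbf{N}(n)}\}$. The index $\mathrm{ind}(\mathcal{D})$ of $\mathcal{D}\in\mathbb{C}^{\mathbf{N}(s)\times\mathbf{N}(s)}$ is the smallest nonnegative integer $k$ with $\dim\mathscr{R}(\mathcal{D}^k)=\dim\mathscr{R}(\mathcal{D}^{k+1})$. The Moore–Penrose inverse $\mathcal{D}^\dagger$ of $\mathcal{D}\in\mathbb{C}^{\mathbf{N}(s)\times\mathbf{N}(s)}$ is the unique $\mathcal{Y}$ with $\mathcal{D}*_s\mathcal{Y}*_s\mathcal{D}=\mathcal{D}$, $\mathcal{Y}*_s\mathcal{D}*_s\mathcal{Y}=\mathcal{Y}$, $(\mathcal{D}*_s\mathcal{Y})^*=\mathcal{D}*_s\mathcal{Y}$, $(\mathcal{Y}*_s\mathcal{D})^*=\mathcal{Y}*_s\mathcal{D}$. With $k=\mathrm{ind}(\mathcal{D})$, the Drazin inverse $\mathcal{D}^{\mathrm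 D}$ is the unique $\mathcal{Y}$ with $\mathcal{Y}*_s\mathcal{D}^{k+1}=\mathcal{D}^k$, $\mathcal{Y}*_s\mathcal{D}*_s\mathcal{Y}=\mathcal{Y}$, $\mathcal{D}*_s\mathcal{Y}=\mathcal{Y}*_s\mathcal{D}$. Composite inverses: $\mathcal{D}^{\mathrm D,\dagger}=\mathcal{D}^{\mathrm D}*_s\mathcal{D}*_s\mathcal{D}^\dagger$ (DMP), $\mathcal{D}^{\dagger,\mathrm D}=\mathcal{D}^\dagger*_s\mathcal{D}*_s\mathcal{D}^{\mathrm D}$ (MPD), $\mathcal{D}^{c,\dagger}=\mathcal{D}^\dagger*_s\mathcal{D}*_s\mathcal{D}^{\mathrm D}*_s\mathcal{D}*_s\mathcal{D}^\dagger$ (CMP). *)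

theory Defs
  imports Complex_Main "HOL-Library.Function_Algebras"
begin

text \<open>A dimension vector N = [N_1,...,N_s]. Tensors in C^{N(s) x N(s)} are functions
 of two multi-indices (index lists), required to vanish outside the index box.\<close>

definition idx :: "nat list \<Rightarrow> nat list set" where
  "idx N = {i. length i = length N \<and> (\<forall>t<length N. i ! t < N ! t)}"

definition tspace :: "nat list \<Rightarrow> (nat list \<Rightarrow> nat list \<Rightarrow> complex) set" where
  "tspace N = {A. \<forall>i j. (i \<notin> idx N \<or> j \<notin> idx N) \<longrightarrow> A i j = 0}"

definition eprod :: "nat list \<Rightarrow> (nat list \<Rightarrow> nat list \<Rightarrow> complex) \<Rightarrow> (nat list \<Rightarrow> nat list \<Rightarrow> complex) \<Rightarrow> (nat list \<Rightarrow> nat list \<Rightarrow> complex)" where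
  "eprod N A B = (\<lambda>i j. \<Sum>k\<in>idx N. A i k * B k j)"

definition eprodv :: "nat list \<Rightarrow> (nat list \<Rightarrow> nat list \<Rightarrow> complex) \<Rightarrow> (nat list \<Rightarrow> complex) \<Rightarrow> (nat list \<Rightarrow> complex)" where
  "eprodv N A E = (\<lambda>i. \<Sum>k\<in>idx N. A i k * E k)"

definition tid :: "nat list \<Rightarrow> nat list \<Rightarrow> nat list \<Rightarrow> complex" where
  "tid N = (\<lambda>i j. if i \<in> idx N \<and> j \<in> idx N then (\<Prod>t<length N. if i ! t = j ! t then 1 else 0) else 0)"

primrec tpow :: "nat list \<Rightarrow> (nat list \<Rightarrow> nat list \<Rightarrow> complex) \<Rightarrow> nat \<Rightarrow> (nat list \<Rightarrow> nat list \<Rightarrow> complex)" where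
  "tpow N D 0 = tid N"
| "tpow N D (Suc j) = eprod N D (tpow N D j)"

definition tstar :: "(nat list \<Rightarrow> nat list \<Rightarrow> complex) \<Rightarrow> (nat list \<Rightarrow> nat list \<Rightarrow> complex)" where
  "tstar A = (\<lambda>j i. cnj (A i j))"

definition trange :: "nat list \<Rightarrow> (nat list \<Rightarrow> nat list \<Rightarrow> complex) \<Rightarrow> (nat list \<Rightarrow> complex) set" where
  "trange N A = {eprodv N A E | E. E \<in> {E. \<forall>i. i \<notin> idx N \<longrightarrow> E i = 0}}"

definition cdim :: "(nat list \<Rightarrow> complex) set \<Rightarrow> nat" where
  "cdim V = vector_space.dim (\<lambda>(c::complex) (f::nat list \<Rightarrow> complex). (\<lambda>x. c * f x)) V"

definition tind :: "nat list \<Rightarrow> (nat list \<Rightarrow> nat list \<Rightarrow> complex) \<Rightarrow> nat" where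
  "tind N D = (LEAST k. cdim (trange N (tpow N D k)) = cdim (trange N (tpow N D (Suc k))))"

definition mpinv :: "nat list \<Rightarrow> (nat list \<Rightarrow> nat list \<Rightarrow> complex) \<Rightarrow> (nat list \<Rightarrow> nat list \<Rightarrow> complex)" where
  "mpinv N D = (THE Y. Y \<in> tspace N \<and> eprod N (eprod N D Y) D = D \<and> eprod N (eprod N Y D) Y = Y
      \<and> tstar (eprod N D Y) = eprod N D Y \<and> tstar (eprod N Y D) = eprod N Y D)"

definition drazin :: "nat list \<Rightarrow> (nat list \<Rightarrow> nat list \<Rightarrow> complex) \<Rightarrow> (nat list \<Rightarrow> nat list \<Rightarrow> complex)" where
  "drazin N D = (THE Y. Y \<in> tspace N \<and> eprod N Y (tpow N D (Suc (tind N D))) = tpow N D (tind N D)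
      \<and> eprod N (eprod N Y D) Y = Y \<and> eprod N D Y = eprod N Y D)"

definition dmp :: "nat list \<Rightarrow> (nat list \<Rightarrow> nat list \<Rightarrow> complex) \<Rightarrow> (nat list \<Rightarrow> nat list \<Rightarrow> complex)" where
  "dmp N D = eprod N (eprod N (drazin N D) D) (mpinv N D)"

definition mpd :: "nat list \<Rightarrow> (nat list \<Rightarrow> nat list \<Rightarrow> complex) \<Rightarrow> (nat list \<Rightarrow> nat list \<Rightarrow> complex)" where
  "mpd N D = eprod N (eprod N (mpinv N D) D) (drazin N D)"

definition cmp :: "nat list \<Rightarrow> (nat list \<Rightarrow> nat list \<Rightarrow> complex) \<Rightarrow> (nat list \<Rightarrow> nat list \<Rightarrow> complex)" where
  "cmp N D = eprod N (eprod N (eprod N (eprod N (mpinv N D) D) (drazin N D)) D) (mpinv N D)"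

end

theory Submission imports Defs begin

lemma fun_sum_apply: "(sum f F) x = sum (\<lambda>a. f a x) F"
  by (induct F rule: infinite_finite_induct) auto

lemma finite_idx: "finite (idx N)"
proof -
  have "idx N \<subseteq> {xs. set xs \<subseteq> {..<Max (insert 0 (set N))} \<and> length xs = length N}"
  proof
    fix xs assume "xs \<in> idx N"
    then have l: "length xs = length N" and b: "\<forall>t<length N. xs ! t < N ! t" by (auto simp: idx_def)
    have "set xs \<subseteq> {..<Max (insert 0 (set N))}"
    proof
      fix x assume "x \<in> set xs"
      then obtain t where t: "t < length xs" "xs ! t = x" by (auto simp: in_set_conv_nth)
      then have "x < N ! t" using b l by auto
      moreover have "N ! t \<le> Max (insert 0 (set N))" using t l by (intro Max_ge) auto
      ultimately show "x \<in> {..<Max (insert 0 (set N))}" by auto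
    qed
    then show "xs \<in> {xs. set xs \<subseteq> {..<Max (insert 0 (set N))} \<and> length xs = length N}" using l by auto
  qed
  then show ?thesis by (rule finite_subset) (rule finite_lists_length_eq, simp)
qed

lemma tid_eq: "tid N i j = (if i \<in> idx N \<and> i = j then 1 else 0)"
proof (cases "i \<in> idx N \<and> j \<in> idx N")
  case True
  then have li: "length i = length N" "length j = length N" by (auto simp: idx_def)
  show ?thesis
  proof (cases "i = j")
    case True then show ?thesis using \<open>i \<in> idx N \<and> j \<in> idx N\<close> by (simp add: tid_def)
  next
    case False
    then obtain t where "t < length N" "i ! t \<noteq> j ! t" using li nth_equalityI by metis
    then show ?thesis using True False by (auto simp: tid_def intro!: prod_zero)
  qed
qed (auto simp: tid_def)

context fixes N :: "nat list" begin

abbreviation mm (infixl "\<odot>" 70) where "A \<odot> B \<equiv> eprod N A B"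
abbreviation pw where "pw D n \<equiv> tpow N D n"
abbreviation TT where "TT \<equiv> tspace N"
abbreviation II where "II \<equiv> idx N"
abbreviation one where "one \<equiv> tid N"

lemma assoc: "(A \<odot> B) \<odot> C = A \<odot> (B \<odot> C)"
  unfolding eprod_def fun_eq_iff
  by (simp add: sum_distrib_left sum_distrib_right mult.assoc, subst sum.swap, simp)

lemma closed[intro,simp]: "A \<in> TT \<Longrightarrow> B \<in> TT \<Longrightarrow> A \<odot> B \<in> TT"
  by (auto simp: tspace_def eprod_def)

lemma one_T[intro,simp]: "one \<in> TT"
  by (auto simp: tspace_def tid_eq)

lemma if10_mult: "(if P then 1 else 0) * (x::complex) = (if P then x else 0)" by simp

lemma one_left[simp]: "A \<in> TT \<Longrightarrow> one \<odot> A = A"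
proof (intro ext)
  fix i j assume A: "A \<in> TT"
  show "(one \<odot> A) i j = A i j"
  proof (cases "i \<in> II")
    case True
    then show ?thesis unfolding eprod_def tid_eq if10_mult by (simp add: finite_idx)
  next
    case False
    then show ?thesis using A unfolding eprod_def tid_eq if10_mult by (simp add: tspace_def)
  qed
qed

lemma one_right[simp]: "A \<in> TT \<Longrightarrow> A \<odot> one = A"
  unfolding fun_eq_iff eprod_def tid_eq
  by (auto simp: finite_idx tspace_def if_distrib cong: if_cong)


lemma pw_T[intro,simp]: "D \<in> TT \<Longrightarrow> pw D n \<in> TT"
  by (induct n) auto

lemma pw_Suc': "D \<in> TT \<Longrightarrow> pw D (Suc n) = pw D n \<odot> D"
proof (induct n)
  case 0 then show ?case by simp
next
  case (Suc n)
  have "pw D (Suc (Suc n)) = D \<odot> (pw D n \<odot> D)" using Suc by simp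
  also have "\<dots> = pw D (Suc n) \<odot> D" by (simp add: assoc)
  finally show ?case .
qed

lemma pw_add: "D \<in> TT \<Longrightarrow> pw D (m + n) = pw D m \<odot> pw D n"
  by (induct m) (auto simp: assoc)

lemma pw_1[simp]: "D \<in> TT \<Longrightarrow> pw D (Suc 0) = D"
  by simp

lemma comm_pw: assumes "A \<in> TT" "B \<in> TT" "A \<odot> B = B \<odot> A"
  shows "A \<odot> pw B n = pw B n \<odot> A"
proof (induct n)
  case 0 then show ?case using assms by simp
next
  case (Suc n)
  have "A \<odot> pw B (Suc n) = (A \<odot> B) \<odot> pw B n" by (simp add: assoc)
  also have "\<dots> = B \<odot> (A \<odot> pw B n)" using assms by (simp add: assoc)
  also have "\<dots> = pw B (Suc n) \<odot> A" using Suc by (simp add: assoc)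
  finally show ?case .
qed

lemma comm_pw2: assumes "A \<in> TT" "B \<in> TT" "A \<odot> B = B \<odot> A"
  shows "pw A m \<odot> pw B n = pw B n \<odot> pw A m"
proof -
  have "B \<odot> pw A m = pw A m \<odot> B" using comm_pw[of B A] assms by simp
  then have "pw A m \<odot> B = B \<odot> pw A m" by simp
  then show ?thesis using comm_pw[of "pw A m" B n] assms by simp
qed

lemma tstar_tstar[simp]: "tstar (tstar A) = A"
  by (simp add: tstar_def)

lemma tstar_prod: "tstar (A \<odot> B) = tstar B \<odot> tstar A"
  by (simp add: tstar_def eprod_def fun_eq_iff mult.commute)

lemma tstar_T[intro,simp]: "A \<in> TT \<Longrightarrow> tstar A \<in> TT"
  by (simp add: tstar_def tspace_def) blast

lemma tstar_one[simp]: "tstar one = one"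
  by (auto simp: tstar_def tid_eq fun_eq_iff)

lemma tstar_pw: "D \<in> TT \<Longrightarrow> tstar (pw D n) = pw (tstar D) n"
proof (induct n)
  case (Suc n)
  have "pw (tstar D) (Suc n) = pw (tstar D) n \<odot> tstar D" by (rule pw_Suc') (use Suc in simp)
  then show ?case using Suc by (simp add: tstar_prod)
qed simp

lemma zero_T[intro,simp]: "0 \<in> TT"
  by (simp add: tspace_def)

lemma mm_zero[simp]: "A \<odot> 0 = 0" "0 \<odot> A = 0"
  by (simp_all add: eprod_def fun_eq_iff)

lemma mm_diff: "A \<odot> (B - C) = A \<odot> B - A \<odot> C" "(B - C) \<odot> A = B \<odot> A - C \<odot> A"
  by (simp_all add: eprod_def fun_eq_iff algebra_simps sum_subtractf)

lemma diff_T[intro,simp]: "A \<in> TT \<Longrightarrow> B \<in> TT \<Longrightarrow> A - B \<in> TT"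
  by (simp add: tspace_def)

lemma pos: assumes A: "A \<in> TT" and z: "tstar A \<odot> A = 0" shows "A = 0"
proof -
  have "A k j = 0" for k j
  proof (cases "k \<in> II \<and> j \<in> II")
    case False then show ?thesis using A by (auto simp: tspace_def)
  next
    case True
    have "(\<Sum>l\<in>II. cnj (A l j) * A l j) = 0" using fun_cong[OF fun_cong[OF z, of j], of j]
      by (simp add: eprod_def tstar_def)
    moreover have e: "\<And>z. cnj z * z = complex_of_real ((cmod z)^2)" by (metis complex_norm_square mult.commute)
    ultimately have "(\<Sum>l\<in>II. complex_of_real ((cmod (A l j))^2)) = 0"
      by (simp only: e)
    then have "complex_of_real (\<Sum>l\<in>II. (cmod (A l j))^2) = 0"
      by (simp only: of_real_sum)
    then have "(\<Sum>l\<in>II. (cmod (A l j))^2) = 0"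
      by (simp only: of_real_eq_0_iff)
    then have "\<forall>l\<in>II. (cmod (A l j))^2 = 0"
      by (subst (asm) sum_nonneg_eq_0_iff) (auto simp: finite_idx)
    then show ?thesis using True by auto
  qed
  then show ?thesis by (simp add: fun_eq_iff)
qed

declare tpow.simps(2)[simp del]

definition isdr where
  "isdr D r Y \<longleftrightarrow> Y \<in> TT \<and> Y \<odot> pw D (Suc r) = pw D r \<and> Y \<odot> D \<odot> Y = Y \<and> D \<odot> Y = Y \<odot> D"

lemma dr_left: assumes D: "D \<in> TT" and Y: "isdr D r Y"
  shows "pw Y (Suc j) \<odot> pw D j = Y"
proof -
  have YT: "Y \<in> TT" and c: "D \<odot> Y = Y \<odot> D" and i: "Y \<odot> D \<odot> Y = Y" using Y by (auto simp: isdr_def)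
  have k: "Y \<odot> (Y \<odot> D) = Y" using c i by (metis assoc)
  have key: "pw Y (Suc (Suc j)) \<odot> D = pw Y (Suc j)" for j
  proof -
    have "pw Y (Suc (Suc j)) = pw Y j \<odot> pw Y (Suc (Suc 0))" using pw_add[OF YT, of j "Suc (Suc 0)"] by simp
    also have "pw Y (Suc (Suc 0)) = Y \<odot> Y" using YT by (simp add: tpow.simps)
    finally have "pw Y (Suc (Suc j)) \<odot> D = pw Y j \<odot> (Y \<odot> (Y \<odot> D))" by (simp add: assoc)
    also have "\<dots> = pw Y (Suc j)" using k pw_Suc'[OF YT] by simp
    finally show ?thesis .
  qed
  show ?thesis
  proof (induct j)
    case 0 then show ?case using YT by simp
  next
    case (Suc j)
    have "pw Y (Suc (Suc j)) \<odot> pw D (Suc j) = (pw Y (Suc (Suc j)) \<odot> D) \<odot> pw D j" by (simp add: assoc tpow.simps)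
    also have "\<dots> = Y" using key Suc by simp
    finally show ?case .
  qed
qed

lemma dr_right: assumes D: "D \<in> TT" and Y: "isdr D r Y"
  shows "pw D j \<odot> pw Y (Suc j) = Y"
proof -
  have YT: "Y \<in> TT" and c: "D \<odot> Y = Y \<odot> D" and i: "Y \<odot> D \<odot> Y = Y" using Y by (auto simp: isdr_def)
  have key: "D \<odot> pw Y (Suc (Suc j)) = pw Y (Suc j)" for j
  proof -
    have "D \<odot> pw Y (Suc (Suc j)) = (D \<odot> Y) \<odot> Y \<odot> pw Y j" by (simp add: assoc tpow.simps)
    also have "\<dots> = Y \<odot> pw Y j" using c i by simp
    finally show ?thesis by (simp add: tpow.simps)
  qed
  show ?thesis
  proof (induct j)
    case 0 then show ?case using YT by simp
  next
    case (Suc j)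
    have "pw D (Suc j) \<odot> pw Y (Suc (Suc j)) = pw D j \<odot> (D \<odot> pw Y (Suc (Suc j)))"
      using pw_Suc'[OF D, of j] by (simp add: assoc)
    also have "\<dots> = Y" using key Suc by simp
    finally show ?case .
  qed
qed

lemma dr_unique: assumes D: "D \<in> TT" and Y1: "isdr D r Y1" and Y2: "isdr D r Y2"
  shows "Y1 = Y2"
proof -
  have T1: "Y1 \<in> TT" and T2: "Y2 \<in> TT" using Y1 Y2 by (auto simp: isdr_def)
  have c2: "Y2 \<odot> pw D (Suc r) = pw D (Suc r) \<odot> Y2"
    using comm_pw[OF T2 D] Y2 by (simp add: isdr_def)
  have e2: "pw D r = pw D (Suc r) \<odot> Y2" using c2 Y2 by (simp add: isdr_def)
  have e1: "pw D r = Y1 \<odot> pw D (Suc r)" using Y1 by (simp add: isdr_def)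
  have "Y1 = pw Y1 (Suc r) \<odot> pw D r" using dr_left[OF D Y1] by simp
  also have "\<dots> = (pw Y1 (Suc r) \<odot> pw D r) \<odot> D \<odot> Y2"
    by (subst e2, subst pw_Suc'[OF D], simp add: assoc)
  also have "\<dots> = Y1 \<odot> D \<odot> Y2" using dr_left[OF D Y1] by simp
  finally have a: "Y1 = Y1 \<odot> D \<odot> Y2" .
  have "Y2 = pw D r \<odot> pw Y2 (Suc r)" using dr_right[OF D Y2] by simp
  also have "\<dots> = Y1 \<odot> D \<odot> (pw D r \<odot> pw Y2 (Suc r))"
    by (subst e1, simp add: assoc tpow.simps)
  also have "\<dots> = Y1 \<odot> D \<odot> Y2" using dr_right[OF D Y2] by simp
  finally show ?thesis using a by simp
qed

lemma X_pow: assumes D: "D \<in> TT" and X: "X \<in> TT" and e: "pw D r = pw D (Suc r) \<odot> X"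
  shows "pw D r = pw D (r + j) \<odot> pw X j"
proof (induct j)
  case 0 then show ?case using D by simp
next
  case (Suc j)
  have "pw D (r + Suc j) \<odot> pw X (Suc j) = (pw D j \<odot> (pw D (Suc r) \<odot> X)) \<odot> pw X j"
    using pw_add[OF D, of j "Suc r"] by (simp add: assoc add.commute tpow.simps)
  also have "\<dots> = pw D (r + j) \<odot> pw X j" using e pw_add[OF D, of j r] by (simp add: add.commute)
  finally show ?case using Suc by simp
qed

lemma X_dr: assumes D: "D \<in> TT" and X: "X \<in> TT" and c: "X \<odot> D = D \<odot> X"
  and e: "pw D r = pw D (Suc r) \<odot> X"
  shows "isdr D r (pw D r \<odot> pw X (Suc r))"
proof -
  let ?Y = "pw D r \<odot> pw X (Suc r)"
  have cc: "pw X m \<odot> pw D n = pw D n \<odot> pw X m" for m n using comm_pw2[OF X D c] .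
  have c1: "pw X m \<odot> D = D \<odot> pw X m" for m using cc[of m 1] D by simp
  have a: "?Y \<odot> pw D (Suc r) = pw D r"
  proof -
    have "?Y \<odot> pw D (Suc r) = pw D r \<odot> (pw X (Suc r) \<odot> pw D (Suc r))" by (simp add: assoc)
    also have "\<dots> = pw D r \<odot> (pw D (Suc r) \<odot> pw X (Suc r))" by (simp add: cc)
    also have "\<dots> = pw D (r + Suc r) \<odot> pw X (Suc r)" by (simp only: pw_add[OF D] assoc)
    also have "\<dots> = pw D r" using X_pow[OF D X e, of "Suc r"] by simp
    finally show ?thesis .
  qed
  have b: "D \<odot> ?Y = ?Y \<odot> D"
  proof -
    have "?Y \<odot> D = pw D r \<odot> (pw X (Suc r) \<odot> D)" by (simp add: assoc)
    also have "\<dots> = pw D r \<odot> D \<odot> pw X (Suc r)" by (simp add: assoc c1)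
    also have "\<dots> = D \<odot> ?Y" using pw_Suc'[OF D, of r] by (metis assoc tpow.simps(2))
    finally show ?thesis by simp
  qed
  have d: "?Y \<odot> D \<odot> ?Y = ?Y"
  proof -
    have "?Y \<odot> D \<odot> ?Y = pw D (Suc r) \<odot> (pw X (Suc r) \<odot> pw D r) \<odot> pw X (Suc r)"
      using b pw_Suc'[OF D, of r] by (simp add: assoc c1)
    also have "\<dots> = (pw D (Suc r) \<odot> pw D r) \<odot> (pw X (Suc r) \<odot> pw X (Suc r))"
      by (simp add: cc assoc)
    also have "\<dots> = (pw D (r + Suc r) \<odot> pw X (Suc r)) \<odot> pw X (Suc r)"
      by (simp add: pw_add[OF D, symmetric] assoc[symmetric])
    also have "\<dots> = ?Y" using X_pow[OF D X e, of "Suc r"] by simp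
    finally show ?thesis .
  qed
  show ?thesis using a b d D X by (simp add: isdr_def)
qed

lemma zero_lam[simp]: "(\<lambda>(a::nat list) (b::nat list). 0::complex) = 0" by (simp add: fun_eq_iff)

definition ismp where
  "ismp D X \<longleftrightarrow> X \<in> TT \<and> D \<odot> X \<odot> D = D \<and> X \<odot> D \<odot> X = X \<and> tstar (D \<odot> X) = D \<odot> X \<and> tstar (X \<odot> D) = X \<odot> D"

lemma tstar3: "tstar (A \<odot> B \<odot> C) = tstar C \<odot> tstar B \<odot> tstar A"
  by (simp add: tstar_prod assoc)

lemma mp_unique: assumes X: "ismp A X" and Y: "ismp A Y" shows "X = Y"
proof -
  have x1: "A \<odot> X \<odot> A = A" and x2: "X \<odot> A \<odot> X = X" and x3: "tstar (A \<odot> X) = A \<odot> X"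
    and x4: "tstar (X \<odot> A) = X \<odot> A" using X by (auto simp: ismp_def)
  have y1: "A \<odot> Y \<odot> A = A" and y2: "Y \<odot> A \<odot> Y = Y" and y3: "tstar (A \<odot> Y) = A \<odot> Y"
    and y4: "tstar (Y \<odot> A) = Y \<odot> A" using Y by (auto simp: ismp_def)
  have tA1: "tstar A = tstar A \<odot> tstar Y \<odot> tstar A" using arg_cong[OF y1, of tstar] by (simp add: tstar3)
  have tA2: "tstar A = tstar A \<odot> tstar X \<odot> tstar A" using arg_cong[OF x1, of tstar] by (simp add: tstar3)
  have "X = X \<odot> tstar (A \<odot> X)" using x2 x3 by (simp add: assoc)
  also have "\<dots> = X \<odot> tstar X \<odot> tstar A" by (simp add: tstar_prod assoc)
  also have "\<dots> = X \<odot> (tstar X \<odot> tstar A) \<odot> (tstar Y \<odot> tstar A)"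
    by (subst (1) tA1) (simp add: assoc)
  also have "\<dots> = X \<odot> tstar (A \<odot> X) \<odot> tstar (A \<odot> Y)" by (simp add: tstar_prod)
  also have "\<dots> = X \<odot> A \<odot> Y" using x2 x3 y3 by (simp add: assoc)
  finally have a: "X = X \<odot> A \<odot> Y" .
  have "Y = tstar (Y \<odot> A) \<odot> Y" using y2 y4 by simp
  also have "\<dots> = tstar A \<odot> tstar Y \<odot> Y" by (simp add: tstar_prod)
  also have "\<dots> = (tstar A \<odot> tstar X) \<odot> (tstar A \<odot> tstar Y) \<odot> Y"
    by (subst (1) tA2) (simp add: assoc)
  also have "\<dots> = tstar (X \<odot> A) \<odot> tstar (Y \<odot> A) \<odot> Y" by (simp add: tstar_prod)
  also have "\<dots> = X \<odot> A \<odot> Y" using y2 x4 y4 by (simp add: assoc)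
  finally show ?thesis using a by simp
qed

lemma herm_pw: "B \<in> TT \<Longrightarrow> tstar B = B \<Longrightarrow> tstar (pw B n) = pw B n"
  by (simp add: tstar_pw)

lemma descent1: assumes B: "B \<in> TT" "tstar B = B" and M: "M \<in> TT"
  and z: "pw B (Suc (Suc j)) \<odot> M = 0" shows "pw B (Suc j) \<odot> M = 0"
proof -
  let ?C = "pw B (Suc j) \<odot> M"
  have "tstar ?C \<odot> ?C = tstar M \<odot> (pw B (Suc j) \<odot> pw B (Suc j)) \<odot> M"
    using herm_pw[OF B] by (simp add: tstar_prod assoc)
  also have "pw B (Suc j) \<odot> pw B (Suc j) = pw B j \<odot> pw B (Suc (Suc j))"
    using pw_add[OF B(1), of "Suc j" "Suc j"] pw_add[OF B(1), of j "Suc (Suc j)"] by simp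
  finally have "tstar ?C \<odot> ?C = 0" using z by (simp add: assoc)
  then show ?thesis using pos[of ?C] B M by simp
qed

lemma descent: assumes B: "B \<in> TT" "tstar B = B" and M: "M \<in> TT"
  shows "pw B (Suc j) \<odot> M = 0 \<Longrightarrow> B \<odot> M = 0"
proof (induct j)
  case 0 then show ?case using B by simp
next
  case (Suc j) then show ?case using descent1[OF B M] by blast
qed

lemma mp_exists: assumes D: "D \<in> TT" and Y: "isdr (tstar D \<odot> D) r Y"
  shows "ismp D (Y \<odot> tstar D)"
proof -
  define B where "B = tstar D \<odot> D"
  have BT: "B \<in> TT" and Bh: "tstar B = B" using D by (auto simp: B_def tstar_prod)
  have Y': "isdr B r Y" using Y by (simp add: B_def)
  have YT: "Y \<in> TT" and ya: "Y \<odot> pw B (Suc r) = pw B r" and yb: "Y \<odot> B \<odot> Y = Y"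
    and yc: "B \<odot> Y = Y \<odot> B" using Y' by (auto simp: isdr_def)
  have cY: "Y \<odot> pw B n = pw B n \<odot> Y" for n using comm_pw[OF YT BT] yc by simp
  have "isdr B r (tstar Y)"
  proof -
    have "tstar Y \<odot> pw B (Suc r) = tstar (pw B (Suc r) \<odot> Y)" using herm_pw[OF BT Bh] by (simp add: tstar_prod)
    also have "\<dots> = pw B r" using cY ya herm_pw[OF BT Bh] by metis
    finally have 1: "tstar Y \<odot> pw B (Suc r) = pw B r" .
    have 2: "tstar Y \<odot> B \<odot> tstar Y = tstar Y" using arg_cong[OF yb, of tstar] Bh by (simp add: tstar3)
    have 3: "B \<odot> tstar Y = tstar Y \<odot> B" using arg_cong[OF yc, of tstar] Bh by (simp add: tstar_prod)
    show ?thesis using 1 2 3 YT by (simp add: isdr_def)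
  qed
  then have hY: "tstar Y = Y" using dr_unique[OF BT _ Y'] by blast
  define M where "M = one - Y \<odot> B"
  have MT: "M \<in> TT" using YT BT by (simp add: M_def)
  have "pw B r \<odot> M = pw B r - pw B r \<odot> Y \<odot> B" using BT by (simp add: M_def mm_diff assoc)
  also have "pw B r \<odot> Y \<odot> B = pw B r"
    using cY[of r] ya pw_Suc'[OF BT, of r] by (metis assoc)
  finally have "pw B r \<odot> M = 0" by simp
  then have "B \<odot> M = 0"
  proof (cases r)
    case 0 then show ?thesis using \<open>pw B r \<odot> M = 0\<close> MT by simp
  next
    case (Suc j) then show ?thesis using descent[OF BT Bh MT] \<open>pw B r \<odot> M = 0\<close> by simp
  qed
  then have "tstar (D \<odot> M) \<odot> (D \<odot> M) = 0" by (simp add: B_def tstar_prod assoc)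
  then have "D \<odot> M = 0" using pos[of "D \<odot> M"] D MT by simp
  then have 1: "D \<odot> (Y \<odot> tstar D) \<odot> D = D" using D by (simp add: M_def mm_diff assoc B_def)
  have 2: "Y \<odot> tstar D \<odot> D \<odot> (Y \<odot> tstar D) = Y \<odot> tstar D"
    using yb by (simp add: B_def) (metis assoc)
  have 3: "tstar (D \<odot> (Y \<odot> tstar D)) = D \<odot> (Y \<odot> tstar D)" using hY by (simp add: tstar_prod assoc)
  have 4: "tstar (Y \<odot> tstar D \<odot> D) = Y \<odot> tstar D \<odot> D"
    using hY yc Bh by (simp add: tstar_prod assoc B_def)
  show ?thesis using 1 2 3 4 YT D by (simp add: ismp_def)
qed


lemma mm_add: "A \<odot> (B + C) = A \<odot> B + A \<odot> C" "(B + C) \<odot> A = B \<odot> A + C \<odot> A"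
  by (simp_all add: eprod_def fun_eq_iff algebra_simps sum.distrib)

lemma mm_sum: "A \<odot> sum f F = (\<Sum>x\<in>F. A \<odot> f x)" "sum f F \<odot> A = (\<Sum>x\<in>F. f x \<odot> A)"
  by (induct F rule: infinite_finite_induct) (simp_all add: mm_add)

lemma add_T[intro,simp]: "A \<in> TT \<Longrightarrow> B \<in> TT \<Longrightarrow> A + B \<in> TT"
  by (simp add: tspace_def)

lemma sum_T[intro]: "(\<And>x. x \<in> F \<Longrightarrow> f x \<in> TT) \<Longrightarrow> sum f F \<in> TT"
  by (induct F rule: infinite_finite_induct) auto

end

definition sm :: "complex \<Rightarrow> (nat list \<Rightarrow> nat list \<Rightarrow> complex) \<Rightarrow> (nat list \<Rightarrow> nat list \<Rightarrow> complex)" where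
  "sm c M = (\<lambda>i j. c * M i j)"

interpretation ms: vector_space sm
  by unfold_locales (auto simp: sm_def fun_eq_iff algebra_simps)

context fixes N :: "nat list" begin

abbreviation mm' (infixl "\<odot>" 70) where "A \<odot> B \<equiv> eprod N A B"
abbreviation pw' where "pw' D n \<equiv> tpow N D n"
abbreviation TT' where "TT' \<equiv> tspace N"
abbreviation II' where "II' \<equiv> idx N"

lemma sm_mm: "A \<odot> sm c B = sm c (A \<odot> B)" "sm c A \<odot> B = sm c (A \<odot> B)"
  by (simp_all add: sm_def eprod_def fun_eq_iff sum_distrib_left algebra_simps)

lemma sm_T[intro,simp]: "A \<in> TT' \<Longrightarrow> sm c A \<in> TT'"
  by (simp add: sm_def tspace_def)

definition unitm :: "nat list \<Rightarrow> nat list \<Rightarrow> nat list \<Rightarrow> nat list \<Rightarrow> complex" where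
  "unitm a b = (\<lambda>i j. if i = a \<and> j = b then 1 else 0)"

lemma T_span: assumes M: "M \<in> TT'"
  shows "M \<in> ms.span ((\<lambda>(a,b). unitm a b) ` (II' \<times> II'))"
proof -
  have "M = (\<Sum>p\<in>II' \<times> II'. sm (M (fst p) (snd p)) (unitm (fst p) (snd p)))"
  proof (intro ext)
    fix i j
    have "(\<Sum>p\<in>II' \<times> II'. sm (M (fst p) (snd p)) (unitm (fst p) (snd p))) i j
        = (\<Sum>p\<in>II' \<times> II'. if p = (i,j) then M i j else 0)"
      by (simp add: fun_sum_apply sm_def unitm_def) (intro sum.cong refl, auto)
    also have "\<dots> = M i j" using M by (auto simp: finite_idx tspace_def)
    finally show "M i j = (\<Sum>p\<in>II' \<times> II'. sm (M (fst p) (snd p)) (unitm (fst p) (snd p))) i j" by simp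
  qed
  also have "\<dots> \<in> ms.span ((\<lambda>(a,b). unitm a b) ` (II' \<times> II'))"
    by (intro ms.span_sum ms.span_scale ms.span_base) auto
  finally show ?thesis .
qed

lemma relation: assumes D: "D \<in> TT'"
  shows "\<exists>F c. finite F \<and> (\<Sum>j\<in>F. sm (c j) (pw' D j)) = 0 \<and> (\<exists>j\<in>F. c j \<noteq> 0)"
proof -
  let ?Bs = "(\<lambda>(a,b). unitm a b) ` (II' \<times> II')"
  define m where "m = card ?Bs"
  have fB: "finite ?Bs" by (simp add: finite_idx)
  show ?thesis
  proof (cases "inj_on (pw' D) {..m}")
    case True
    let ?S = "pw' D ` {..m}"
    have cS: "card ?S = Suc m" using True by (simp add: card_image)
    have sub: "?S \<subseteq> ms.span ?Bs" using T_span D by auto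
    have "\<not> ms.independent ?S"
    proof
      assume "ms.independent ?S"
      then have "card ?S \<le> card ?Bs" using ms.independent_span_bound[OF fB _ sub] by blast
      then show False using cS m_def by simp
    qed
    then obtain t u where t: "finite t" "t \<subseteq> ?S" "(\<Sum>v\<in>t. sm (u v) v) = 0" "\<exists>v\<in>t. u v \<noteq> 0"
      unfolding ms.dependent_explicit by blast
    define F where "F = {j \<in> {..m}. pw' D j \<in> t}"
    have tF: "t = pw' D ` F" using t(2) by (auto simp: F_def)
    have iF: "inj_on (pw' D) F" using True by (rule inj_on_subset) (auto simp: F_def)
    have "(\<Sum>j\<in>F. sm (u (pw' D j)) (pw' D j)) = 0"
      using t(3) by (simp add: tF sum.reindex[OF iF])
    moreover have "\<exists>j\<in>F. u (pw' D j) \<noteq> 0" using t(4) tF by auto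
    moreover have "finite F" by (simp add: F_def)
    ultimately show ?thesis by (intro exI[of _ F] exI[of _ "\<lambda>j. u (pw' D j)"]) simp
  next
    case False
    then obtain a b where ab: "a \<noteq> b" "pw' D a = pw' D b" by (auto simp: inj_on_def)
    let ?c = "\<lambda>j. if j = a then 1 else - 1::complex"
    have "(\<Sum>j\<in>{a,b}. sm (?c j) (pw' D j)) = 0"
      using ab by (simp add: sm_def fun_eq_iff)
    then show ?thesis by (intro exI[of _ "{a,b}"] exI[of _ ?c]) simp
  qed
qed

lemma poly_X: assumes D: "D \<in> TT'"
  shows "\<exists>r X. X \<in> TT' \<and> X \<odot> D = D \<odot> X \<and> pw' D r = pw' D (Suc r) \<odot> X"
proof -
  obtain F c where F: "finite F" "(\<Sum>j\<in>F. sm (c j) (pw' D j)) = 0" "\<exists>j\<in>F. c j \<noteq> 0"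
    using relation[OF D] by blast
  define r where "r = Min {j\<in>F. c j \<noteq> 0}"
  have rF: "r \<in> F" "c r \<noteq> 0" using Min_in[of "{j\<in>F. c j \<noteq> 0}"] F by (auto simp: r_def)
  have rmin: "j \<in> F \<Longrightarrow> c j \<noteq> 0 \<Longrightarrow> r \<le> j" for j using F by (auto simp: r_def)
  define G where "G = F - {r}"
  define X where "X = sm (-1 / c r) (\<Sum>j\<in>G. sm (c j) (pw' D (j - Suc r)))"
  have XT: "X \<in> TT'" unfolding X_def using D by (intro sm_T sum_T) auto
  have cm: "pw' D n \<odot> D = D \<odot> pw' D n" for n using pw_Suc'[OF D, of n] by (simp add: tpow.simps)
  have "X \<odot> D = D \<odot> X" unfolding X_def by (simp only: sm_mm mm_sum cm)
  moreover have "pw' D r = pw' D (Suc r) \<odot> X"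
  proof -
    have tm: "sm (c j) (pw' D (Suc r) \<odot> pw' D (j - Suc r)) = sm (c j) (pw' D j)" if "j \<in> G" for j
    proof (cases "c j = 0")
      case True then show ?thesis by (simp add: sm_def fun_eq_iff)
    next
      case False
      then have "r < j" using rmin[of j] that by (auto simp: G_def)
      then have "Suc r + (j - Suc r) = j" by simp
      then show ?thesis using pw_add[OF D, of "Suc r" "j - Suc r"] by simp
    qed
    have "(\<Sum>j\<in>F. sm (c j) (pw' D j)) = sm (c r) (pw' D r) + (\<Sum>j\<in>G. sm (c j) (pw' D j))"
      unfolding G_def using F(1) rF(1) by (rule sum.remove)
    then have sG: "(\<Sum>j\<in>G. sm (c j) (pw' D j)) = - sm (c r) (pw' D r)" using F(2)
      by (metis neg_eq_iff_add_eq_0)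
    have "pw' D (Suc r) \<odot> X = sm (-1 / c r) (\<Sum>j\<in>G. sm (c j) (pw' D (Suc r) \<odot> pw' D (j - Suc r)))"
      unfolding X_def by (simp only: sm_mm mm_sum)
    also have "\<dots> = sm (-1 / c r) (\<Sum>j\<in>G. sm (c j) (pw' D j))"
      using tm by (metis (no_types, lifting) sum.cong)
    also have "\<dots> = sm (-1 / c r) (- sm (c r) (pw' D r))" by (simp only: sG)
    also have "\<dots> = pw' D r" using rF(2) by (simp add: sm_def fun_eq_iff)
    finally show ?thesis by simp
  qed
  ultimately show ?thesis using XT by blast
qed


end

interpretation vs: vector_space "\<lambda>(c::complex) (f::nat list \<Rightarrow> complex). (\<lambda>x. c * f x)"
  by unfold_locales (auto simp: fun_eq_iff algebra_simps)

lemma cdim_eq: "cdim V = vs.dim V"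
  by (simp add: cdim_def)

context fixes N :: "nat list" begin

abbreviation mm2 (infixl "\<odot>" 70) where "A \<odot> B \<equiv> eprod N A B"
abbreviation pw2 where "pw2 D n \<equiv> tpow N D n"
abbreviation TT2 where "TT2 \<equiv> tspace N"
abbreviation II2 where "II2 \<equiv> idx N"
abbreviation TV where "TV \<equiv> {E. \<forall>i. i \<notin> idx N \<longrightarrow> E i = 0}"
abbreviation ev where "ev A E \<equiv> eprodv N A E"

lemma ev_assoc: "ev (A \<odot> B) E = ev A (ev B E)"
  unfolding eprodv_def eprod_def fun_eq_iff
  by (simp add: sum_distrib_left sum_distrib_right mult.assoc, subst sum.swap, simp)

lemma ev_T: "A \<in> TT2 \<Longrightarrow> ev A E \<in> TV"
  by (simp add: eprodv_def tspace_def)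

lemma range_mono: assumes "A = B \<odot> C" "C \<in> TT2" shows "trange N A \<subseteq> trange N B"
proof
  fix v assume "v \<in> trange N A"
  then obtain E where E: "E \<in> TV" "v = ev A E" by (auto simp: trange_def)
  then have "v = ev B (ev C E)" using assms by (simp add: ev_assoc)
  then show "v \<in> trange N B" using ev_T[OF assms(2), of E] by (auto simp: trange_def)
qed

lemma col: assumes A: "A \<in> TT2" and sub: "trange N A \<subseteq> trange N B"
  shows "\<exists>U\<in>TT2. A = B \<odot> U"
proof -
  have ex: "\<exists>E. E \<in> TV \<and> (\<lambda>i. A i j) = ev B E" if j: "j \<in> II2" for j
  proof -
    define e where "e = (\<lambda>l. if l = j then 1 else (0::complex))"
    have eT: "e \<in> TV" using j by (auto simp: e_def)
    have ee: "ev A e = (\<lambda>i. A i j)"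
    proof
      fix i
      have "(\<Sum>k\<in>II2. A i k * e k) = (\<Sum>k\<in>II2. if k = j then A i k else 0)"
        by (rule sum.cong) (auto simp: e_def)
      then show "ev A e i = A i j" using j by (simp add: eprodv_def finite_idx)
    qed
    have "(\<lambda>i. A i j) \<in> trange N A" unfolding trange_def
      by (intro CollectI exI[of _ e] conjI) (use ee eT in auto)
    then have "(\<lambda>i. A i j) \<in> trange N B" using sub by blast
    then show ?thesis unfolding trange_def by blast
  qed
  then have "\<forall>j\<in>II2. \<exists>E. E \<in> TV \<and> (\<lambda>i. A i j) = ev B E" by blast
  then have "\<exists>f. \<forall>j\<in>II2. f j \<in> TV \<and> (\<lambda>i. A i j) = ev B (f j)" by (rule bchoice)
  then obtain f where f: "\<forall>j\<in>II2. f j \<in> TV \<and> (\<lambda>i. A i j) = ev B (f j)" by blast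
  define U where "U = (\<lambda>l j. if j \<in> II2 then f j l else 0)"
  have U: "U \<in> TT2"
    unfolding tspace_def
  proof (intro CollectI allI impI)
    fix l j assume h: "l \<notin> II2 \<or> j \<notin> II2"
    show "U l j = 0"
    proof (cases "j \<in> II2")
      case True
      then have "l \<notin> II2" using h by blast
      then show ?thesis using f True by (simp add: U_def)
    qed (simp add: U_def)
  qed
  have "A = B \<odot> U"
  proof (intro ext)
    fix i j
    show "A i j = (B \<odot> U) i j"
    proof (cases "j \<in> II2")
      case True
      have "(B \<odot> U) i j = ev B (f j) i"
        using True by (simp add: U_def eprod_def eprodv_def)
      also have "\<dots> = A i j" using f True by metis
      finally show ?thesis by simp
    next
      case False then show ?thesis using A by (simp add: U_def eprod_def tspace_def)
    qed
  qed
  then show ?thesis using U by blast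
qed

lemma trange_subspace: "vs.subspace (trange N A)"
proof (rule vs.subspaceI)
  show "0 \<in> trange N A" unfolding trange_def
    by (rule CollectI, rule exI[of _ 0]) (simp add: eprodv_def fun_eq_iff)
next
  fix x y assume "x \<in> trange N A" "y \<in> trange N A"
  then obtain E F where "E \<in> TV" "F \<in> TV" "x = ev A E" "y = ev A F" by (auto simp: trange_def)
  then show "x + y \<in> trange N A" unfolding trange_def
    by (intro CollectI exI[of _ "E + F"]) (simp add: eprodv_def fun_eq_iff algebra_simps sum.distrib)
next
  fix c x assume "x \<in> trange N A"
  then obtain E where "E \<in> TV" "x = ev A E" by (auto simp: trange_def)
  then show "(\<lambda>i. c * x i) \<in> trange N A" unfolding trange_def
    by (intro CollectI exI[of _ "\<lambda>i. c * E i"]) (simp add: eprodv_def fun_eq_iff algebra_simps sum_distrib_left)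
qed

lemma trange_span: "trange N A \<subseteq> vs.span ((\<lambda>j i. A i j) ` II2)"
proof
  fix v assume "v \<in> trange N A"
  then obtain E where "v = ev A E" by (auto simp: trange_def)
  then have "v = (\<Sum>j\<in>II2. (\<lambda>i. E j * A i j))"
    by (simp add: eprodv_def fun_eq_iff fun_sum_apply mult.commute)
  also have "\<dots> \<in> vs.span ((\<lambda>j i. A i j) ` II2)"
  proof (rule vs.span_sum)
    fix j assume "j \<in> II2"
    then have "(\<lambda>i. A i j) \<in> vs.span ((\<lambda>j i. A i j) ` II2)" by (intro vs.span_base) blast
    then show "(\<lambda>i. E j * A i j) \<in> vs.span ((\<lambda>j i. A i j) ` II2)" by (rule vs.span_scale)
  qed
  finally show "v \<in> vs.span ((\<lambda>j i. A i j) ` II2)" .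
qed

end

lemma dim_incl: assumes VW: "V \<subseteq> W" and sV: "vs.subspace V" and WF: "W \<subseteq> vs.span F" and fF: "finite F"
  and d: "vs.dim W \<le> vs.dim V" shows "W \<subseteq> V"
proof -
  have indep_le: "card B' \<le> vs.dim W" if "vs.independent B'" "B' \<subseteq> W" for B'
  proof -
    obtain C where C: "C \<subseteq> W" "vs.independent C" "W \<subseteq> vs.span C" "card C = vs.dim W"
      by (rule vs.basis_exists)
    have "finite C" using vs.independent_span_bound[OF fF C(2)] C(1) WF by blast
    then show ?thesis using vs.independent_span_bound[OF _ that(1)] C that(2) by fastforce
  qed
  obtain B where B: "B \<subseteq> V" "vs.independent B" "V \<subseteq> vs.span B" "card B = vs.dim V"
    by (rule vs.basis_exists)
  have fB: "finite B" using vs.independent_span_bound[OF fF B(2)] B(1) VW WF by blast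
  have "W \<subseteq> vs.span B"
  proof
    fix w assume w: "w \<in> W"
    show "w \<in> vs.span B"
    proof (rule ccontr)
      assume nw: "w \<notin> vs.span B"
      then have "w \<notin> B" using vs.span_base by blast
      have "vs.independent (insert w B)" using vs.independent_insertI[OF nw B(2)] .
      moreover have "insert w B \<subseteq> W" using w B(1) VW by auto
      ultimately have "card (insert w B) \<le> vs.dim W" by (rule indep_le)
      then show False using fB \<open>w \<notin> B\<close> B(4) d by simp
    qed
  qed
  also have "vs.span B \<subseteq> V" using B(1) sV by (rule vs.span_minimal)
  finally show ?thesis .
qed

context fixes N :: "nat list" begin

abbreviation mm3 (infixl "\<odot>" 70) where "A \<odot> B \<equiv> eprod N A B"
abbreviation pw3 where "pw3 D n \<equiv> tpow N D n"
abbreviation TT3 where "TT3 \<equiv> tspace N"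

lemma drazin_ok: assumes D: "D \<in> TT3" shows "isdr N D (tind N D) (drazin N D)"
proof -
  obtain r X where X: "X \<in> TT3" "X \<odot> D = D \<odot> X" "pw3 D r = pw3 D (Suc r) \<odot> X"
    using poly_X[OF D] by blast
  define Y0 where "Y0 = pw3 D r \<odot> pw3 X (Suc r)"
  have Y0: "isdr N D r Y0" unfolding Y0_def using X_dr[OF D X] .
  have "trange N (pw3 D r) = trange N (pw3 D (Suc r))"
  proof
    show "trange N (pw3 D r) \<subseteq> trange N (pw3 D (Suc r))" using range_mono[OF X(3) X(1)] .
    show "trange N (pw3 D (Suc r)) \<subseteq> trange N (pw3 D r)" using range_mono[OF pw_Suc'[OF D] D] .
  qed
  then have ex: "cdim (trange N (pw3 D r)) = cdim (trange N (pw3 D (Suc r)))" by simp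
  define k where "k = tind N D"
  have kr: "k \<le> r" unfolding k_def tind_def by (rule Least_le) (rule ex)
  have kd: "cdim (trange N (pw3 D k)) = cdim (trange N (pw3 D (Suc k)))"
    unfolding k_def tind_def by (rule LeastI) (rule ex)
  have "trange N (pw3 D k) \<subseteq> trange N (pw3 D (Suc k))"
  proof (rule dim_incl)
    show "trange N (pw3 D (Suc k)) \<subseteq> trange N (pw3 D k)" using range_mono[OF pw_Suc'[OF D] D] .
    show "vs.subspace (trange N (pw3 D (Suc k)))" by (rule trange_subspace)
    show "trange N (pw3 D k) \<subseteq> vs.span ((\<lambda>j i. pw3 D k i j) ` idx N)" by (rule trange_span)
    show "finite ((\<lambda>j i. pw3 D k i j) ` idx N)" by (simp add: finite_idx)
    show "vs.dim (trange N (pw3 D k)) \<le> vs.dim (trange N (pw3 D (Suc k)))" using kd by (simp add: cdim_eq)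
  qed
  then obtain U where U: "U \<in> TT3" "pw3 D k = pw3 D (Suc k) \<odot> U" using col[of "pw3 D k" N] D by blast
  have Z: "pw3 D k = pw3 D r \<odot> pw3 U (r - k)" using X_pow[OF D U(1) U(2), of "r - k"] kr by simp
  have Y0T: "Y0 \<in> TT3" and y1: "Y0 \<odot> pw3 D (Suc r) = pw3 D r" and y2: "Y0 \<odot> D \<odot> Y0 = Y0"
    and y3: "D \<odot> Y0 = Y0 \<odot> D" using Y0 by (auto simp: isdr_def)
  have "Y0 \<odot> pw3 D (Suc k) = Y0 \<odot> pw3 D (Suc r) \<odot> pw3 U (r - k)"
    using Z by (simp add: tpow.simps assoc)
  also have "\<dots> = pw3 D k" using y1 Z by simp
  finally have "isdr N D k Y0" using Y0T y2 y3 by (simp add: isdr_def)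
  then have "\<exists>!Y. isdr N D k Y" using dr_unique[OF D] by blast
  then have "isdr N D k (THE Y. isdr N D k Y)" by (rule theI')
  then show ?thesis unfolding drazin_def k_def isdr_def by simp
qed

lemma mpinv_ok: assumes D: "D \<in> TT3" shows "ismp N D (mpinv N D)"
proof -
  have B: "tstar D \<odot> D \<in> TT3" using D by simp
  obtain r X where X: "X \<in> TT3" "X \<odot> (tstar D \<odot> D) = (tstar D \<odot> D) \<odot> X"
    "pw3 (tstar D \<odot> D) r = pw3 (tstar D \<odot> D) (Suc r) \<odot> X"
    using poly_X[OF B] by blast
  have "ismp N D (pw3 (tstar D \<odot> D) r \<odot> pw3 X (Suc r) \<odot> tstar D)"
    using mp_exists[OF D X_dr[OF B X]] .
  then have "\<exists>!Y. ismp N D Y" using mp_unique by blast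
  then have "ismp N D (THE Y. ismp N D Y)" by (rule theI')
  then show ?thesis unfolding mpinv_def ismp_def by simp
qed

end

theorem mainTheorem8:
  fixes N :: "nat list" and D :: "nat list \<Rightarrow> nat list \<Rightarrow> complex" and k :: nat
  assumes "\<forall>t<length N. 0 < N ! t"
    and "D \<in> tspace N"
    and "tind N D = k"
  shows "(eprod N (dmp N D) D = eprod N (cmp N D) D
            \<longleftrightarrow> trange N (tpow N D k) \<subseteq> trange N (mpinv N D))
       \<and> (eprod N D (mpd N D) = eprod N D (cmp N D)
            \<longleftrightarrow> tpow N D k = eprod N (tpow N D (Suc k)) (mpinv N D))"
proof -
  note D = assms(2)
  define Y where "Y = drazin N D"
  define P where "P = mpinv N D"
  have dr: "isdr N D k Y" using drazin_ok[OF D] assms(3) by (simp add: Y_def)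
  have mp: "ismp N D P" using mpinv_ok[OF D] by (simp add: P_def)
  have YT: "Y \<in> tspace N" and ya: "eprod N Y (tpow N D (Suc k)) = tpow N D k"
    and yb: "eprod N (eprod N Y D) Y = Y" and yc: "eprod N D Y = eprod N Y D"
    using dr by (auto simp: isdr_def)
  have PT: "P \<in> tspace N" and p1: "eprod N (eprod N D P) D = D" and p2: "eprod N (eprod N P D) P = P"
    using mp by (auto simp: ismp_def)
  have p1': "eprod N D (eprod N P (eprod N D Z)) = eprod N D Z" for Z using p1 by (metis assoc)
  have p1'': "eprod N D (eprod N P D) = D" using p1 by (simp add: assoc)
  have p2': "eprod N P (eprod N D (eprod N P Z)) = eprod N P Z" for Z using p2 by (metis assoc)
  have dmpD: "eprod N (dmp N D) D = eprod N Y D" unfolding dmp_def Y_def[symmetric] P_def[symmetric]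
    using p1 by (simp add: assoc)
  have cmpD: "eprod N (cmp N D) D = eprod N P (eprod N D (eprod N Y D))"
    unfolding cmp_def Y_def[symmetric] P_def[symmetric] using p1' p1'' by (simp add: assoc)
  have Dmpd: "eprod N D (mpd N D) = eprod N D Y" unfolding mpd_def Y_def[symmetric] P_def[symmetric]
    using p1' p1'' by (simp add: assoc)
  have Dcmp: "eprod N D (cmp N D) = eprod N D (eprod N Y (eprod N D P))"
    unfolding cmp_def Y_def[symmetric] P_def[symmetric] using p1' p1'' by (simp add: assoc)
  have powT: "tpow N D n \<in> tspace N" for n using D by simp
  have DkD: "eprod N (tpow N D k) D = tpow N D (Suc k)" using pw_Suc'[OF D] by simp
  have DDk: "eprod N D (tpow N D k) = tpow N D (Suc k)" by (simp add: tpow.simps)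
  have YDr: "eprod N Y D = eprod N (tpow N D k) (eprod N D (tpow N Y (Suc k)))"
  proof -
    have "eprod N Y D = eprod N D Y" using yc by simp
    also have "\<dots> = eprod N D (eprod N (tpow N D k) (tpow N Y (Suc k)))"
      using dr_right[OF D dr, of k] by simp
    also have "\<dots> = eprod N (tpow N D k) (eprod N D (tpow N Y (Suc k)))"
      using DkD DDk by (metis assoc)
    finally show ?thesis .
  qed
  have YDl: "eprod N Y D = eprod N (eprod N (tpow N Y (Suc k)) D) (tpow N D k)"
  proof -
    have "eprod N Y D = eprod N (tpow N Y (Suc k)) (eprod N (tpow N D k) D)"
      using dr_left[OF D dr, of k] by (metis assoc)
    also have "\<dots> = eprod N (eprod N (tpow N Y (Suc k)) D) (tpow N D k)"
      using DkD DDk by (metis assoc)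
    finally show ?thesis .
  qed
  have cY: "eprod N Y (tpow N D n) = eprod N (tpow N D n) Y" for n using comm_pw[OF YT D] yc by simp
  have part1: "eprod N Y D = eprod N P (eprod N D (eprod N Y D))
      \<longleftrightarrow> trange N (tpow N D k) \<subseteq> trange N P"
  proof
    assume h: "eprod N Y D = eprod N P (eprod N D (eprod N Y D))"
    have "tpow N D k = eprod N (eprod N Y D) (tpow N D k)" using ya DDk by (simp add: assoc)
    also have "\<dots> = eprod N P (eprod N (eprod N D (eprod N Y D)) (tpow N D k))"
      by (subst h) (simp add: assoc)
    finally show "trange N (tpow N D k) \<subseteq> trange N P"
      by (rule range_mono) (use D YT in simp)
  next
    assume h: "trange N (tpow N D k) \<subseteq> trange N P"
    obtain W where W: "W \<in> tspace N" "tpow N D k = eprod N P W" using col[OF powT h] by blast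
    have "eprod N P (eprod N D (eprod N Y D)) = eprod N P (eprod N D (eprod N P (eprod N W (eprod N D (tpow N Y (Suc k))))))"
      using YDr W(2) by (simp add: assoc)
    also have "\<dots> = eprod N P (eprod N W (eprod N D (tpow N Y (Suc k))))" by (rule p2')
    also have "\<dots> = eprod N Y D" using YDr W(2) by (simp add: assoc)
    finally show "eprod N Y D = eprod N P (eprod N D (eprod N Y D))" by simp
  qed
  have part2: "eprod N D Y = eprod N D (eprod N Y (eprod N D P))
      \<longleftrightarrow> tpow N D k = eprod N (tpow N D (Suc k)) P"
  proof
    assume h: "eprod N D Y = eprod N D (eprod N Y (eprod N D P))"
    have e: "eprod N (tpow N D k) (eprod N D Y) = tpow N D k"
      using ya cY[of "Suc k"] DkD by (metis assoc)
    have "tpow N D k = eprod N (tpow N D k) (eprod N D (eprod N Y (eprod N D P)))"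
      using e h by simp
    also have "\<dots> = eprod N (eprod N (tpow N D k) (eprod N D Y)) (eprod N D P)" by (simp add: assoc)
    also have "\<dots> = eprod N (tpow N D (Suc k)) P" using e DkD by (metis assoc)
    finally show "tpow N D k = eprod N (tpow N D (Suc k)) P" .
  next
    assume h: "tpow N D k = eprod N (tpow N D (Suc k)) P"
    have "eprod N D (eprod N Y (eprod N D P)) = eprod N (eprod N Y D) (eprod N D P)"
      using yc by (metis assoc)
    also have "\<dots> = eprod N (eprod N (tpow N Y (Suc k)) D) (eprod N (eprod N (tpow N D k) D) P)"
      using YDl by (metis assoc)
    also have "\<dots> = eprod N (eprod N (tpow N Y (Suc k)) D) (tpow N D k)" using DkD h by simp
    also have "\<dots> = eprod N D Y" using YDl yc by simp
    finally show "eprod N D Y = eprod N D (eprod N Y (eprod N D P))" by simp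
  qed
  show ?thesis using part1 part2 dmpD cmpD Dmpd Dcmp yc by (simp add: P_def)
qed

end
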